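(* Let $G$ be a triangulation and $v_0\in V(G)$. For every integer $k\ge 0$, the extended degree-bounded ball satisfies $|V(\bar B_k^8(v_0))|<5^k\, d(v_0)$.
   Context: A triangulation is a simple graph (with at least $4$ vertices) embedded in the sphere all of whose faces are triangles. For a vertex $v_0$ and integer $k\ge0$: $V_1$ is the set of vertices $v_1$ for which there is a path $P$ from $v_0$ to $v_1$ of length at most $k$ all of whose vertices other than $v_0$ have degree at most $8$; $B_k^8(v_0)=G[V_1]$ is the degree-bounded ball. $V_2$ is the set of vertices $v\ne v_0$ of degree at least $9$ for which there is a path from $v_0$ to $v$ of length at most $k$ whose internal vertices all have degree at most $8$. The extended degree-bounded ball is $\bar B_k^8(v_0)=G[V_1\cup V_2]$. *)

theory Defs
  imports Main
begin

text \<open>An embedding in the sphere is represented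
combinatorially by a rotation system (Heffter--Edmonds): for every vertex u a
cyclic permutation r u of its neighbours. Faces are the orbits of the
face-tracing permutation on darts; the embedding is in the sphere iff the
graph is connected and V - E + F = 2.\<close>

definition nbrs :: "'a set \<Rightarrow> ('a \<Rightarrow> 'a \<Rightarrow> bool) \<Rightarrow> 'a \<Rightarrow> 'a set" where
  "nbrs V E u = {v \<in> V. E u v}"

definition deg :: "'a set \<Rightarrow> ('a \<Rightarrow> 'a \<Rightarrow> bool) \<Rightarrow> 'a \<Rightarrow> nat" where
  "deg V E u = card (nbrs V E u)"

definition darts :: "'a set \<Rightarrow> ('a \<Rightarrow> 'a \<Rightarrow> bool) \<Rightarrow> ('a \<times> 'a) set" where
  "darts V E = {(u, v). u \<in> V \<and> v \<in> V \<and> E u v}"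

definition edges :: "'a set \<Rightarrow> ('a \<Rightarrow> 'a \<Rightarrow> bool) \<Rightarrow> 'a set set" where
  "edges V E = {{u, v} | u v. u \<in> V \<and> v \<in> V \<and> E u v}"

definition simple_graph :: "'a set \<Rightarrow> ('a \<Rightarrow> 'a \<Rightarrow> bool) \<Rightarrow> bool" where
  "simple_graph V E \<longleftrightarrow> finite V \<and> (\<forall>u v. E u v \<longrightarrow> u \<in> V \<and> v \<in> V)
     \<and> (\<forall>u. \<not> E u u) \<and> (\<forall>u v. E u v \<longrightarrow> E v u)"

definition connected_graph :: "'a set \<Rightarrow> ('a \<Rightarrow> 'a \<Rightarrow> bool) \<Rightarrow> bool" where
  "connected_graph V E \<longleftrightarrow> (\<forall>u \<in> V. \<forall>v \<in> V. E\<^sup>*\<^sup>* u v)"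

definition rotation_system :: "'a set \<Rightarrow> ('a \<Rightarrow> 'a \<Rightarrow> bool) \<Rightarrow> ('a \<Rightarrow> 'a \<Rightarrow> 'a) \<Rightarrow> bool" where
  "rotation_system V E r \<longleftrightarrow>
     (\<forall>u \<in> V. bij_betw (r u) (nbrs V E u) (nbrs V E u)
        \<and> (\<forall>v \<in> nbrs V E u. \<forall>w \<in> nbrs V E u. \<exists>n. (r u ^^ n) v = w))"

definition face_perm :: "('a \<Rightarrow> 'a \<Rightarrow> 'a) \<Rightarrow> 'a \<times> 'a \<Rightarrow> 'a \<times> 'a" where
  "face_perm r d = (snd d, r (snd d) (fst d))"

definition faces :: "'a set \<Rightarrow> ('a \<Rightarrow> 'a \<Rightarrow> bool) \<Rightarrow> ('a \<Rightarrow> 'a \<Rightarrow> 'a) \<Rightarrow> ('a \<times> 'a) set set" where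
  "faces V E r = (\<lambda>d. {(face_perm r ^^ n) d | n. True}) ` darts V E"

definition triangulation :: "'a set \<Rightarrow> ('a \<Rightarrow> 'a \<Rightarrow> bool) \<Rightarrow> bool" where
  "triangulation V E \<longleftrightarrow> simple_graph V E \<and> card V \<ge> 4 \<and> connected_graph V E \<and>
     (\<exists>r. rotation_system V E r \<and> (\<forall>f \<in> faces V E r. card f = 3)
        \<and> int (card V) - int (card (edges V E)) + int (card (faces V E r)) = 2)"

text \<open>A path: list of distinct vertices, consecutive ones adjacent; its length is
the number of edges, i.e. length xs - 1.\<close>
definition is_path :: "'a set \<Rightarrow> ('a \<Rightarrow> 'a \<Rightarrow> bool) \<Rightarrow> 'a list \<Rightarrow> bool" where
  "is_path V E xs \<longleftrightarrow> xs \<noteq> [] \<and> distinct xs \<and> set xs \<subseteq> V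
     \<and> (\<forall>i. Suc i < length xs \<longrightarrow> E (xs ! i) (xs ! Suc i))"

definition ball_V1 :: "'a set \<Rightarrow> ('a \<Rightarrow> 'a \<Rightarrow> bool) \<Rightarrow> nat \<Rightarrow> 'a \<Rightarrow> 'a set" where
  "ball_V1 V E k v0 = {v1. \<exists>xs. is_path V E xs \<and> hd xs = v0 \<and> last xs = v1
      \<and> length xs - 1 \<le> k \<and> (\<forall>x \<in> set (tl xs). deg V E x \<le> 8)}"

definition ball_V2 :: "'a set \<Rightarrow> ('a \<Rightarrow> 'a \<Rightarrow> bool) \<Rightarrow> nat \<Rightarrow> 'a \<Rightarrow> 'a set" where
  "ball_V2 V E k v0 = {v. v \<noteq> v0 \<and> deg V E v \<ge> 9 \<and> (\<exists>xs. is_path V E xs \<and> hd xs = v0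
      \<and> last xs = v \<and> length xs - 1 \<le> k \<and> (\<forall>x \<in> set (butlast (tl xs)). deg V E x \<le> 8))}"

text \<open>Vertex set of the extended degree-bounded ball (it is an induced subgraph).\<close>
definition ext_ball_vertices :: "'a set \<Rightarrow> ('a \<Rightarrow> 'a \<Rightarrow> bool) \<Rightarrow> nat \<Rightarrow> 'a \<Rightarrow> 'a set" where
  "ext_ball_vertices V E k v0 = ball_V1 V E k v0 \<union> ball_V2 V E k v0"

end

theory Submission
  imports Defs
begin

lemma orbit3:
  assumes inj: "inj_on f S" and fS: "\<And>x. x \<in> S \<Longrightarrow> f x \<in> S" and d: "d \<in> S"
    and c: "card {(f^^n) d | n. True} = 3"
  shows "(f^^3) d = d"
proof (rule ccontr)
  assume ne: "(f^^3) d \<noteq> d"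
  let ?O = "{(f^^n) d | n. True}"
  have fin: "finite ?O" using c by (intro card_ge_0_finite) simp
  have S1: "f d \<in> S" "f (f d) \<in> S" using fS d by auto
  have n1: "f d \<noteq> d"
  proof
    assume h: "f d = d"
    have "(f^^n) d = d" for n by (induct n) (auto simp: h)
    hence "?O = {d}" by auto
    thus False using c by simp
  qed
  have n2: "f (f d) \<noteq> d"
  proof
    assume h: "f (f d) = d"
    have "(f^^n) d \<in> {d, f d}" for n by (induct n) (auto simp: h)
    hence "?O \<subseteq> {d, f d}" by auto
    hence "card ?O \<le> card {d, f d}" by (intro card_mono) auto
    also have "\<dots> \<le> 2" by (simp add: card_insert_if)
    finally show False using c by simp
  qed
  have f3: "(f^^3) d = f (f (f d))" by (simp add: numeral_3_eq_3)
  have a1: "f d \<noteq> f (f d)" using inj d S1 n1 by (metis inj_onD)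
  have a2: "f (f d) \<noteq> f (f (f d))" using inj S1 a1 by (metis inj_onD)
  have a3: "f d \<noteq> f (f (f d))" using inj d S1 n2 by (metis inj_onD)
  have sub: "{d, f d, f (f d), f (f (f d))} \<subseteq> ?O"
  proof -
    have "(f^^n) d \<in> ?O" for n by blast
    from this[of 0] this[of 1] this[of 2] this[of 3] show ?thesis
      by (simp add: numeral_2_eq_2 numeral_3_eq_3)
  qed
  have "card {d, f d, f (f d), f (f (f d))} = 4"
    using n1 n2 ne a1 a2 a3 f3 by auto
  hence "4 \<le> card ?O" using card_mono[OF fin sub] by simp
  thus False using c by simp
qed

lemma sg_facts:
  assumes "simple_graph V E"
  shows "finite V" "E u v \<Longrightarrow> u \<in> V" "E u v \<Longrightarrow> v \<in> V" "\<not> E u u" "E u v \<Longrightarrow> E v u"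
  using assms unfolding simple_graph_def by blast+

lemma face_tri:
  assumes sg: "simple_graph V E" and rs: "rotation_system V E r"
    and tri: "\<forall>f \<in> faces V E r. card f = 3" and e: "E u v"
  shows "r v u \<in> nbrs V E v \<and> r (r v u) v = u \<and> r u (r v u) = v"
proof -
  have uV: "u \<in> V" and vV: "v \<in> V" using sg_facts[OF sg] e by auto
  have bij: "\<And>a. a \<in> V \<Longrightarrow> bij_betw (r a) (nbrs V E a) (nbrs V E a)"
    using rs unfolding rotation_system_def by blast
  let ?S = "darts V E" and ?f = "face_perm r"
  have inj: "inj_on ?f ?S"
  proof (rule inj_onI)
    fix x y assume x: "x \<in> ?S" and y: "y \<in> ?S" and h: "?f x = ?f y"
    obtain a b where xab: "x = (a, b)" by (cases x)
    obtain a' b' where yab: "y = (a', b')" by (cases y)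
    have bb: "b = b'" and rr: "r b a = r b a'" using h xab yab by (auto simp: face_perm_def)
    have "a \<in> nbrs V E b" "a' \<in> nbrs V E b" "b \<in> V"
      using x y xab yab bb sg_facts[OF sg] by (auto simp: darts_def nbrs_def)
    hence "a = a'" using bij rr by (metis bij_betw_imp_inj_on inj_onD)
    thus "x = y" using xab yab bb by simp
  qed
  have fS: "?f x \<in> ?S" if x: "x \<in> ?S" for x
  proof -
    obtain a b where xab: "x = (a, b)" by (cases x)
    have "a \<in> nbrs V E b" "b \<in> V"
      using x xab sg_facts[OF sg] by (auto simp: darts_def nbrs_def)
    hence "r b a \<in> nbrs V E b" using bij by (meson bij_betwE)
    thus ?thesis using xab \<open>b \<in> V\<close> by (auto simp: face_perm_def darts_def nbrs_def)
  qed
  have d: "(u, v) \<in> ?S" using uV vV e by (simp add: darts_def)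
  have "{(?f^^n) (u, v) | n. True} \<in> faces V E r" using d unfolding faces_def by blast
  hence "card {(?f^^n) (u, v) | n. True} = 3" using tri by blast
  hence f3: "(?f^^3) (u, v) = (u, v)" using orbit3[OF inj fS d] by blast
  have "u \<in> nbrs V E v" using uV sg_facts(5)[OF sg e] by (simp add: nbrs_def)
  hence w: "r v u \<in> nbrs V E v" using bij[OF vV] by (meson bij_betwE)
  from f3 have "r (r v u) v = u \<and> r u (r v u) = v"
    by (simp add: numeral_3_eq_3 face_perm_def) metis
  with w show ?thesis by blast
qed

lemma deg_le2:
  assumes rs: "rotation_system V E r" and wV: "w \<in> V" and p: "p \<in> nbrs V E w"
    and h: "r w (r w p) = p"
  shows "deg V E w \<le> 2"
proof -
  have cyc: "\<forall>z \<in> nbrs V E w. \<exists>n. (r w ^^ n) p = z"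
    using rs wV p unfolding rotation_system_def by blast
  have "(r w ^^ n) p \<in> {p, r w p}" for n by (induct n) (auto simp: h)
  hence "nbrs V E w \<subseteq> {p, r w p}" using cyc by (metis subsetI)
  hence "deg V E w \<le> card {p, r w p}" unfolding deg_def by (intro card_mono) auto
  also have "\<dots> \<le> 2" by (simp add: card_insert_if)
  finally show ?thesis .
qed


lemma nb_bound:
  assumes sg: "simple_graph V E" and rs: "rotation_system V E r"
    and tri: "\<forall>f \<in> faces V E r. card f = 3"
    and wV: "w \<in> V" and dw: "deg V E w \<le> 8" and pw: "E p w" and pQ: "p \<in> Q"
    and nQ: "\<And>x. E p x \<Longrightarrow> x \<in> Q"
  shows "card (nbrs V E w - Q) \<le> 5"
proof -
  have finN: "finite (nbrs V E w)" using sg_facts(1)[OF sg] by (simp add: nbrs_def)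
  show ?thesis
  proof (cases "deg V E w \<le> 5")
    case True
    have "card (nbrs V E w - Q) \<le> card (nbrs V E w)" using finN by (intro card_mono) auto
    thus ?thesis using True by (simp add: deg_def)
  next
    case False
    have wp: "E w p" using sg_facts(5)[OF sg pw] .
    have pV: "p \<in> V" using sg_facts(2)[OF sg pw] .
    have bij: "\<And>a. a \<in> V \<Longrightarrow> bij_betw (r a) (nbrs V E a) (nbrs V E a)"
      using rs unfolding rotation_system_def by blast
    define x where "x = r w p"
    define y where "y = r p w"
    have t1: "x \<in> nbrs V E w" "r x w = p" using face_tri[OF sg rs tri pw] x_def by auto
    have t2: "y \<in> nbrs V E p" "r y p = w" "r w y = p" using face_tri[OF sg rs tri wp] y_def by auto
    have xV: "x \<in> V" "E w x" using t1 by (auto simp: nbrs_def)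
    have "w \<in> nbrs V E x" using xV sg_facts(5)[OF sg xV(2)] wV by (simp add: nbrs_def)
    hence "p \<in> nbrs V E x" using t1 bij[OF xV(1)] by (metis bij_betwE)
    hence Exp: "E x p" by (simp add: nbrs_def)
    have yV: "y \<in> V" "E p y" using t2 by (auto simp: nbrs_def)
    have "p \<in> nbrs V E y" using yV sg_facts(5)[OF sg yV(2)] pV by (simp add: nbrs_def)
    hence "w \<in> nbrs V E y" using t2 bij[OF yV(1)] by (metis bij_betwE)
    hence "E y w" by (simp add: nbrs_def)
    hence yw: "y \<in> nbrs V E w" using yV sg_facts(5)[OF sg] by (simp add: nbrs_def)
    have xp: "x \<noteq> p" using Exp sg_facts(4)[OF sg] by auto
    have yp: "y \<noteq> p" using yV sg_facts(4)[OF sg] by auto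
    have xy: "x \<noteq> y"
    proof
      assume "x = y"
      hence "r w (r w p) = p" using t2 x_def by simp
      hence "deg V E w \<le> 2" using deg_le2[OF rs wV] wp pV by (simp add: nbrs_def)
      thus False using False by simp
    qed
    have inQ: "x \<in> Q" "y \<in> Q" using nQ sg_facts(5)[OF sg Exp] yV by auto
    have pN: "p \<in> nbrs V E w" using wp pV by (simp add: nbrs_def)
    have sub: "nbrs V E w - Q \<subseteq> nbrs V E w - {p, x, y}" using inQ pQ by auto
    have c3: "card {p, x, y} = 3" using xp yp xy by auto
    have "card (nbrs V E w - Q) \<le> card (nbrs V E w - {p, x, y})"
      using finN sub by (intro card_mono) auto
    also have "\<dots> = card (nbrs V E w) - 3"
      using pN t1(1) yw c3 finN by (subst card_Diff_subset) auto
    finally show ?thesis using dw by (simp add: deg_def)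
  qed
qed

primrec Rs :: "'a set \<Rightarrow> ('a \<Rightarrow> 'a \<Rightarrow> bool) \<Rightarrow> 'a \<Rightarrow> nat \<Rightarrow> 'a set" where
  "Rs V E v0 0 = {v0}"
| "Rs V E v0 (Suc i) = Rs V E v0 i \<union> {v \<in> V. deg V E v \<le> 8 \<and> (\<exists>u \<in> Rs V E v0 i. E u v)}"

definition Nb :: "('a \<Rightarrow> 'a \<Rightarrow> bool) \<Rightarrow> 'a set \<Rightarrow> 'a set" where
  "Nb E S = {v. \<exists>u \<in> S. E u v}"

definition Qs :: "'a set \<Rightarrow> ('a \<Rightarrow> 'a \<Rightarrow> bool) \<Rightarrow> 'a \<Rightarrow> nat \<Rightarrow> 'a set" where
  "Qs V E v0 i = Rs V E v0 i \<union> Nb E (Rs V E v0 i)"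

lemma Rs_mono: "i \<le> j \<Longrightarrow> Rs V E v0 i \<subseteq> Rs V E v0 j"
proof (induct j)
  case 0 thus ?case by simp
next
  case (Suc j) thus ?case by (cases "i = Suc j") auto
qed

lemma Rs_sub: "v0 \<in> V \<Longrightarrow> Rs V E v0 i \<subseteq> V"
  by (induct i) auto

lemma v0_Rs: "v0 \<in> Rs V E v0 i"
  using Rs_mono[of 0 i] by auto

lemma Rs_Suc_sub: "Rs V E v0 (Suc i) \<subseteq> Qs V E v0 i"
  by (auto simp: Qs_def Nb_def)

lemma path_Rs:
  assumes p: "is_path V E xs" and h: "hd xs = v0" and m: "m \<le> length xs"
    and dg: "\<And>j. 0 < j \<Longrightarrow> j < m \<Longrightarrow> deg V E (xs ! j) \<le> 8"
  shows "j < m \<Longrightarrow> xs ! j \<in> Rs V E v0 j"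
proof (induct j)
  case 0
  have "xs \<noteq> []" using p by (simp add: is_path_def)
  thus ?case using h by (simp add: hd_conv_nth)
next
  case (Suc j)
  have "E (xs ! j) (xs ! Suc j)" using p Suc.prems m by (simp add: is_path_def)
  moreover have "xs ! Suc j \<in> V" using p Suc.prems m by (auto simp: is_path_def)
  moreover have "deg V E (xs ! Suc j) \<le> 8" using dg Suc.prems by simp
  ultimately show ?case using Suc by auto
qed


lemma ext_sub:
  "ext_ball_vertices V E k v0 \<subseteq> (if k = 0 then {v0} else Qs V E v0 (k - 1))"
proof
  fix v assume "v \<in> ext_ball_vertices V E k v0"
  hence "v \<in> ball_V1 V E k v0 \<or> v \<in> ball_V2 V E k v0" by (simp add: ext_ball_vertices_def)
  thus "v \<in> (if k = 0 then {v0} else Qs V E v0 (k - 1))"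
  proof
    assume "v \<in> ball_V1 V E k v0"
    then obtain xs where p: "is_path V E xs" and h: "hd xs = v0" and l: "last xs = v"
      and len: "length xs - 1 \<le> k" and dg: "\<forall>x \<in> set (tl xs). deg V E x \<le> 8"
      unfolding ball_V1_def by blast
    have ne: "xs \<noteq> []" using p by (simp add: is_path_def)
    have dg': "deg V E (xs ! j) \<le> 8" if "0 < j" "j < length xs" for j
    proof -
      have "xs ! j = tl xs ! (j - 1)" using that ne by (simp add: nth_tl)
      moreover have "j - 1 < length (tl xs)" using that by simp
      ultimately have "xs ! j \<in> set (tl xs)" by simp
      thus ?thesis using dg by blast
    qed
    have "xs ! (length xs - 1) \<in> Rs V E v0 (length xs - 1)"
      using path_Rs[OF p h order_refl dg'] ne by simp
    hence vR: "v \<in> Rs V E v0 k" using l ne Rs_mono[OF len, of V E v0] by (auto simp: last_conv_nth)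
    show ?thesis
    proof (cases k)
      case 0 thus ?thesis using vR by simp
    next
      case (Suc i) thus ?thesis using vR Rs_Suc_sub[of V E v0 i] by auto
    qed
  next
    assume "v \<in> ball_V2 V E k v0"
    then obtain xs where vne: "v \<noteq> v0" and p: "is_path V E xs" and h: "hd xs = v0" and l: "last xs = v"
      and len: "length xs - 1 \<le> k" and dg: "\<forall>x \<in> set (butlast (tl xs)). deg V E x \<le> 8"
      unfolding ball_V2_def by blast
    have ne: "xs \<noteq> []" using p by (simp add: is_path_def)
    have n2: "2 \<le> length xs"
    proof (rule ccontr)
      assume a: "\<not> 2 \<le> length xs"
      have "0 < length xs" using ne by simp
      hence "length xs = 1" using a by linarith
      hence "last xs = hd xs" by (cases xs) auto
      thus False using h l vne by simp
    qed
    have dg': "deg V E (xs ! j) \<le> 8" if "0 < j" "j < length xs - 1" for j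
    proof -
      have "xs ! j = tl xs ! (j - 1)" using that ne by (simp add: nth_tl)
      also have "\<dots> = butlast (tl xs) ! (j - 1)" using that by (simp add: nth_butlast)
      finally have "xs ! j = butlast (tl xs) ! (j - 1)" .
      moreover have "j - 1 < length (butlast (tl xs))" using that by simp
      ultimately have "xs ! j \<in> set (butlast (tl xs))" by simp
      thus ?thesis using dg by blast
    qed
    have "xs ! (length xs - 2) \<in> Rs V E v0 (length xs - 2)"
    proof (rule path_Rs[OF p h, of "length xs - 1"])
      show "length xs - 1 \<le> length xs" by simp
      show "length xs - 2 < length xs - 1" using n2 by simp
      fix j assume "0 < j" "j < length xs - 1"
      thus "deg V E (xs ! j) \<le> 8" by (rule dg')
    qed
    moreover have "length xs - 2 \<le> k - 1" using len by simp
    ultimately have uR: "xs ! (length xs - 2) \<in> Rs V E v0 (k - 1)" using Rs_mono[of "length xs - 2" "k - 1" V E v0] by blast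
    have "E (xs ! (length xs - 2)) (xs ! Suc (length xs - 2))" using p n2 by (simp add: is_path_def)
    moreover have "Suc (length xs - 2) = length xs - 1" using n2 by simp
    ultimately have "E (xs ! (length xs - 2)) v" using l ne by (simp add: last_conv_nth)
    hence "v \<in> Qs V E v0 (k - 1)" using uR by (auto simp: Qs_def Nb_def)
    moreover have "k \<noteq> 0" using len n2 by simp
    ultimately show ?thesis by simp
  qed
qed


lemma Nb_sub: "simple_graph V E \<Longrightarrow> Nb E S \<subseteq> V"
  using sg_facts(3) by (fastforce simp: Nb_def)

lemma Qs_sub: "simple_graph V E \<Longrightarrow> v0 \<in> V \<Longrightarrow> Qs V E v0 i \<subseteq> V"
  using Rs_sub Nb_sub by (metis Qs_def Un_least)

lemma count_step:
  assumes sg: "simple_graph V E" and rs: "rotation_system V E r"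
    and tri: "\<forall>f \<in> faces V E r. card f = 3" and v0: "v0 \<in> V"
  shows "card (Qs V E v0 (Suc j)) \<le> card (Qs V E v0 j) + 5 * card (Rs V E v0 (Suc j) - Rs V E v0 j)"
proof -
  let ?L = "Rs V E v0 (Suc j) - Rs V E v0 j"
  let ?Q = "Qs V E v0 j"
  have finV: "finite V" using sg_facts(1)[OF sg] .
  have finQ: "finite ?Q" using Qs_sub[OF sg v0] finV by (rule finite_subset)
  have finL: "finite ?L" using Rs_sub[OF v0, of E "Suc j"] finV by (meson finite_Diff finite_subset)
  have sub: "Qs V E v0 (Suc j) \<subseteq> ?Q \<union> (\<Union>w \<in> ?L. nbrs V E w - ?Q)"
  proof
    fix v assume v: "v \<in> Qs V E v0 (Suc j)"
    show "v \<in> ?Q \<union> (\<Union>w \<in> ?L. nbrs V E w - ?Q)"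
    proof (cases "v \<in> Rs V E v0 (Suc j)")
      case True thus ?thesis using Rs_Suc_sub[of V E v0 j] by (rule_tac UnI1) blast
    next
      case False
      then obtain u where u: "u \<in> Rs V E v0 (Suc j)" "E u v" using v by (auto simp: Qs_def Nb_def)
      show ?thesis
      proof (cases "u \<in> Rs V E v0 j")
        case True thus ?thesis using u by (auto simp: Qs_def Nb_def)
      next
        case False
        have "v \<in> nbrs V E u" using u sg_facts(3)[OF sg] by (simp add: nbrs_def)
        thus ?thesis using u False by blast
      qed
    qed
  qed
  have bnd: "card (nbrs V E w - ?Q) \<le> 5" if w: "w \<in> ?L" for w
  proof -
    from w obtain p where wV: "w \<in> V" and dw: "deg V E w \<le> 8" and p: "p \<in> Rs V E v0 j" "E p w"
      by auto
    show ?thesis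
    proof (rule nb_bound[OF sg rs tri wV dw p(2)])
      show "p \<in> ?Q" using p by (simp add: Qs_def)
      fix x assume "E p x" thus "x \<in> ?Q" using p by (auto simp: Qs_def Nb_def)
    qed
  qed
  have finN: "finite (nbrs V E w - ?Q)" for w using finV by (simp add: nbrs_def)
  have "card (Qs V E v0 (Suc j)) \<le> card (?Q \<union> (\<Union>w \<in> ?L. nbrs V E w - ?Q))"
    using sub finQ finL finN by (intro card_mono) auto
  also have "\<dots> \<le> card ?Q + card (\<Union>w \<in> ?L. nbrs V E w - ?Q)" by (rule card_Un_le)
  also have "card (\<Union>w \<in> ?L. nbrs V E w - ?Q) \<le> (\<Sum>w \<in> ?L. card (nbrs V E w - ?Q))"
    by (rule card_UN_le[OF finL])
  also have "\<dots> \<le> (\<Sum>w \<in> ?L. (5::nat))" by (rule sum_mono) (rule bnd)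
  also have "\<dots> = card ?L * 5" by simp
  finally show ?thesis by simp
qed

lemma count_inv:
  assumes sg: "simple_graph V E" and rs: "rotation_system V E r"
    and tri: "\<forall>f \<in> faces V E r. card f = 3" and v0: "v0 \<in> V"
  shows "card (Qs V E v0 j) + 4 \<le> 5 * card (Rs V E v0 j) + deg V E v0
     \<and> 4 * card (Qs V E v0 j) + deg V E v0 \<le> 5 ^ Suc j * deg V E v0 + 4"
proof (induct j)
  case 0
  have "Qs V E v0 0 = insert v0 (nbrs V E v0)"
    using sg_facts(3)[OF sg] by (auto simp: Qs_def Nb_def nbrs_def)
  hence "card (Qs V E v0 0) \<le> Suc (deg V E v0)" by (simp add: deg_def card_insert_le_m1 card_insert_if)
  thus ?case by simp
next
  case (Suc j)
  let ?a = "card (Qs V E v0 j)" and ?a' = "card (Qs V E v0 (Suc j))"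
  let ?b = "card (Rs V E v0 j)" and ?b' = "card (Rs V E v0 (Suc j))"
  let ?l = "card (Rs V E v0 (Suc j) - Rs V E v0 j)"
  have finV: "finite V" using sg_facts(1)[OF sg] .
  have finR: "finite (Rs V E v0 i)" for i using Rs_sub[OF v0] finV by (rule finite_subset)
  have finQ: "finite (Qs V E v0 i)" for i using Qs_sub[OF sg v0] finV by (rule finite_subset)
  have s1: "?a' \<le> ?a + 5 * ?l" by (rule count_step[OF sg rs tri v0])
  have s2: "?b' = ?b + ?l"
  proof -
    have "Rs V E v0 j \<subseteq> Rs V E v0 (Suc j)" by auto
    hence "?l = ?b' - ?b" using finR by (simp add: card_Diff_subset)
    moreover have "?b \<le> ?b'" by (rule card_mono[OF finR]) auto
    ultimately show ?thesis by simp
  qed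
  have s3: "?b' \<le> ?a" by (rule card_mono[OF finQ Rs_Suc_sub])
  have p5: "5 ^ Suc (Suc j) * deg V E v0 = 5 * (5 ^ Suc j * deg V E v0)" by simp
  show ?case using Suc s1 s2 s3 p5 by linarith
qed


theorem lemma6p2:
  fixes V :: "'a set" and E :: "'a \<Rightarrow> 'a \<Rightarrow> bool" and v0 :: 'a and k :: nat
  assumes "triangulation V E" and "v0 \<in> V"
  shows "card (ext_ball_vertices V E k v0) < 5 ^ k * deg V E v0"
proof -
  have sg: "simple_graph V E" and c4: "card V \<ge> 4" and con: "connected_graph V E"
    using assms(1) unfolding triangulation_def by auto
  obtain r where rs: "rotation_system V E r" and tri: "\<forall>f \<in> faces V E r. card f = 3"
    using assms(1) unfolding triangulation_def by auto
  have v0: "v0 \<in> V" by (rule assms(2))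
  have finV: "finite V" using sg_facts(1)[OF sg] .
  obtain u where u: "u \<in> V" "u \<noteq> v0"
  proof -
    have "\<not> V \<subseteq> {v0}"
    proof
      assume "V \<subseteq> {v0}"
      hence "card V \<le> card {v0}" by (intro card_mono) auto
      thus False using c4 by simp
    qed
    thus ?thesis using that by blast
  qed
  have "E\<^sup>*\<^sup>* v0 u" using con u v0 unfolding connected_graph_def by blast
  then obtain w where ew: "E v0 w" using u(2) by (metis converse_rtranclpE)
  have we: "E w v0" using sg_facts(5)[OF sg ew] .
  have f1: "r w v0 \<in> nbrs V E w" using face_tri[OF sg rs tri ew] by blast
  have f2: "r v0 w \<in> nbrs V E v0" "r (r v0 w) v0 = w" using face_tri[OF sg rs tri we] by auto
  have neq: "r v0 w \<noteq> w"
  proof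
    assume "r v0 w = w"
    hence "r w v0 = w" using f2(2) by simp
    hence "E w w" using f1 by (simp add: nbrs_def)
    thus False using sg_facts(4)[OF sg] by blast
  qed
  have wN: "w \<in> nbrs V E v0" using ew sg_facts(3)[OF sg ew] by (simp add: nbrs_def)
  have d2: "2 \<le> deg V E v0"
  proof -
    have "{w, r v0 w} \<subseteq> nbrs V E v0" using wN f2(1) by auto
    hence "card {w, r v0 w} \<le> deg V E v0" unfolding deg_def
      using finV by (intro card_mono) (auto simp: nbrs_def)
    thus ?thesis using neq by simp
  qed
  have finQ: "finite (Qs V E v0 i)" for i using Qs_sub[OF sg v0] finV by (rule finite_subset)
  show ?thesis
  proof (cases k)
    case 0
    have "card (ext_ball_vertices V E k v0) \<le> card {v0}"
      using ext_sub[of V E k v0] 0 by (intro card_mono) auto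
    thus ?thesis using 0 d2 by simp
  next
    case (Suc i)
    have "card (ext_ball_vertices V E k v0) \<le> card (Qs V E v0 i)"
      using ext_sub[of V E k v0] Suc by (intro card_mono[OF finQ]) auto
    moreover have "4 * card (Qs V E v0 i) + deg V E v0 \<le> 5 ^ Suc i * deg V E v0 + 4"
      using count_inv[OF sg rs tri v0, of i] by blast
    moreover have "deg V E v0 \<le> 5 ^ Suc i * deg V E v0" by simp
    ultimately show ?thesis using Suc d2 by (simp only:)
  qed
qed

end
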